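(* For all $A,B\in\mathrm{SL}(2,\mathbb Z)$, $c(AB)\le c(A)+c(B)$ and $c(AB)\equiv c(A)+c(B)\pmod 2$.
   Context: Admissible hexagons are the sets $\{\pm a,\pm b,\pm(a+b)\}\subset\mathbb Z^2$ with $(a,b)$ a basis of $\mathbb Z^2$ (they correspond to isotopy classes of $\theta$-curves in $T^2$). $\Gamma$ is the graph whose vertices are admissible hexagons, two being adjacent iff they share two opposite pairs of vertices $\pm\sigma,\pm\mu$ (this corresponds to a flip of a $\theta$-curve); $\Gamma$ is a trivalent tree, $d$ its graph distance, and $\mathrm{SL}(2,\mathbb Z)$ acts on it by isometries. With $W_0=\{\pm(1,0),\pm(0,1),\pm(1,-1)\}$, $c(A)=d(W_0,AW_0)$. *)

theory Defs
  imports "HOL-Analysis.Analysis"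
begin

definition vec2 :: "int \<Rightarrow> int \<Rightarrow> int ^ 2" where
  "vec2 x y = (\<chi> i. if i = 1 then x else y)"

definition is_basis_Z2 :: "int ^ 2 \<Rightarrow> int ^ 2 \<Rightarrow> bool" where
  "is_basis_Z2 a b \<longleftrightarrow> (\<forall>v :: int ^ 2. \<exists>!p :: int \<times> int. v = fst p *s a + snd p *s b)"

definition hexagon :: "int ^ 2 \<Rightarrow> int ^ 2 \<Rightarrow> (int ^ 2) set" where
  "hexagon a b = {a, -a, b, -b, a + b, -(a + b)}"

definition admissible :: "(int ^ 2) set \<Rightarrow> bool" where
  "admissible H \<longleftrightarrow> (\<exists>a b. is_basis_Z2 a b \<and> H = hexagon a b)"

definition adj :: "(int ^ 2) set \<Rightarrow> (int ^ 2) set \<Rightarrow> bool" where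
  "adj H K \<longleftrightarrow> admissible H \<and> admissible K \<and> H \<noteq> K \<and>
     (\<exists>\<sigma> \<mu>. \<mu> \<noteq> \<sigma> \<and> \<mu> \<noteq> -\<sigma> \<and> {\<sigma>, -\<sigma>, \<mu>, -\<mu>} \<subseteq> H \<inter> K)"

definition gdist :: "(int ^ 2) set \<Rightarrow> (int ^ 2) set \<Rightarrow> nat" where
  "gdist H K = (LEAST n. (adj ^^ n) H K)"

definition W0 :: "(int ^ 2) set" where
  "W0 = {vec2 1 0, -vec2 1 0, vec2 0 1, -vec2 0 1, vec2 1 (-1), -vec2 1 (-1)}"

definition act :: "int ^ 2 ^ 2 \<Rightarrow> (int ^ 2) set \<Rightarrow> (int ^ 2) set" where
  "act A H = (\<lambda>v. A *v v) ` H"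

definition cfun :: "int ^ 2 ^ 2 \<Rightarrow> nat" where
  "cfun A = gdist W0 (act A W0)"

end

theory Submission
  imports Defs
begin


lemma veq: "(u::int^2) = v \<longleftrightarrow> u$1 = v$1 \<and> u$2 = v$2"
  by (simp add: vec_eq_iff forall_2)

lemma mv1: "((A::int^2^2) *v v)$1 = A$1$1* v$1 + A$1$2* v$2"
  by (simp add: matrix_vector_mult_def sum_2)
lemma mv2: "((A::int^2^2) *v v)$2 = A$2$1* v$1 + A$2$2* v$2"
  by (simp add: matrix_vector_mult_def sum_2)

definition dt :: "int^2 \<Rightarrow> int^2 \<Rightarrow> int" where "dt a b = a$1*b$2 - a$2*b$1"
definition ub :: "int^2 \<Rightarrow> int^2 \<Rightarrow> bool" where "ub a b \<longleftrightarrow> dt a b = 1 \<or> dt a b = -1"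

lemma basis_ub: "is_basis_Z2 a b \<longleftrightarrow> ub a b"
proof
  assume h: "is_basis_Z2 a b"
  obtain p q where 1: "vec2 1 0 = p *s a + q *s b"
    using h unfolding is_basis_Z2_def by (metis prod.collapse)
  obtain r t where 2: "vec2 0 1 = r *s a + t *s b"
    using h unfolding is_basis_Z2_def by (metis prod.collapse)
  have e: "1 = p*a$1 + q*b$1" "0 = p*a$2+q*b$2" "0 = r*a$1+t*b$1" "1 = r*a$2+t*b$2"
    using 1 2 by (auto simp: veq vec2_def)
  have "dt a b * (p*t - q*r) = (p*a$1 + q*b$1)*(r*a$2+t*b$2) - (p*a$2+q*b$2)*(r*a$1+t*b$1)"
    by (simp add: dt_def algebra_simps)
  also have "\<dots> = 1" using e by simp
  finally have "dt a b * (p*t - q*r) = 1" .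
  then show "ub a b" unfolding ub_def using zmult_eq_1_iff by blast
next
  assume u: "ub a b"
  define D where "D = dt a b"
  have DD: "D*D = 1" using u unfolding ub_def D_def by auto
  show "is_basis_Z2 a b" unfolding is_basis_Z2_def
  proof
    fix v :: "int^2"
    let ?p = "(v$1*b$2 - v$2*b$1)*D" and ?q = "(a$1* v$2 - a$2* v$1)*D"
    have ex: "v = ?p *s a + ?q *s b"
    proof -
      have "v$1 = ?p * a$1 + ?q * b$1"
      proof -
        have "?p * a$1 + ?q * b$1 = v$1 * (D * dt a b)" by (simp add: dt_def algebra_simps)
        then show ?thesis using DD D_def by simp
      qed
      moreover have "v$2 = ?p * a$2 + ?q * b$2"
      proof -
        have "?p * a$2 + ?q * b$2 = v$2 * (D * dt a b)" by (simp add: dt_def algebra_simps)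
        then show ?thesis using DD D_def by simp
      qed
      ultimately show ?thesis by (simp add: veq)
    qed
    show "\<exists>!p. v = fst p *s a + snd p *s b"
    proof (rule ex1I[of _ "(?p, ?q)"])
      show "v = fst (?p, ?q) *s a + snd (?p, ?q) *s b" using ex by simp
    next
      fix pq :: "int \<times> int" assume "v = fst pq *s a + snd pq *s b"
      then obtain x y where pq: "pq = (x,y)" and vx: "v = x *s a + y *s b" by (cases pq) auto
      have c1: "v$1 = x*a$1 + y*b$1" "v$2 = x*a$2 + y*b$2" using vx by auto
      have "v$1*b$2 - v$2*b$1 = x * D" unfolding c1 D_def dt_def by (simp add: algebra_simps)
      then have "x = ?p" using DD by (metis mult.assoc mult_1_right)
      moreover have "a$1* v$2 - a$2* v$1 = y * D" unfolding c1 D_def dt_def by (simp add: algebra_simps)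
      then have "y = ?q" using DD by (metis mult.assoc mult_1_right)
      ultimately show "pq = (?p, ?q)" using pq by simp
    qed
  qed
qed



lemma ub_neg2[simp]: "ub a (-b) \<longleftrightarrow> ub a b" "ub (-a) b \<longleftrightarrow> ub a b"
  by (auto simp: ub_def dt_def)

lemma hex_struct:
  "ub a b \<Longrightarrow> \<sigma> \<in> hexagon a b \<Longrightarrow> \<mu> \<in> hexagon a b \<Longrightarrow> \<mu> \<noteq> \<sigma> \<Longrightarrow> \<mu> \<noteq> -\<sigma> \<Longrightarrow>
   ub \<sigma> \<mu> \<and> (hexagon a b = hexagon \<sigma> \<mu> \<or> hexagon a b = hexagon \<sigma> (-\<mu>))"
  apply (simp only: hexagon_def insert_iff empty_iff simp_thms)
  apply (elim disjE)
  apply (simp_all only: )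
  apply (simp_all add: algebra_simps insert_commute)
  apply (simp_all add: ub_def dt_def algebra_simps)
  apply linarith+
  done


lemma adm_iff: "admissible H \<longleftrightarrow> (\<exists>a b. ub a b \<and> H = hexagon a b)"
  by (simp add: admissible_def basis_ub)

lemma dt_simps[simp]:
  "dt (a+b) c = dt a c + dt b c" "dt a (b+c) = dt a b + dt a c"
  "dt (-a) b = - dt a b" "dt a (-b) = - dt a b"
  "dt (a-b) c = dt a c - dt b c" "dt a (b-c) = dt a b - dt a c"
  "dt a a = 0"
  by (auto simp: dt_def algebra_simps)

lemma dt_swap: "dt b a = - dt a b" by (simp add: dt_def)

lemma ub_swap: "ub b a \<longleftrightarrow> ub a b"
proof -
  have "dt b a = - dt a b" by (rule dt_swap)
  then show ?thesis by (auto simp: ub_def)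
qed

lemma dt_comp: "w$1 * dt x y = x$1 * dt w y + y$1 * dt x w" "w$2 * dt x y = x$2 * dt w y + y$2 * dt x w"
  by (simp_all add: dt_def algebra_simps)

lemma eq_dt: assumes "ub x y" shows "(u = v) \<longleftrightarrow> (dt u y = dt v y \<and> dt x u = dt x v)"
proof
  assume h: "dt u y = dt v y \<and> dt x u = dt x v"
  let ?w = "u - v"
  have 1: "dt ?w y = 0" "dt x ?w = 0" using h by auto
  have D: "dt x y * dt x y = 1" using assms by (auto simp: ub_def)
  have "?w$1 * dt x y = 0" "?w$2 * dt x y = 0" using 1 dt_comp[of ?w x y] by simp_all
  then have "?w$1 = 0" "?w$2 = 0" using D by auto
  then show "u = v" by (simp add: veq)
qed simp



lemma hex_neq: assumes "ub x y" shows "hexagon x y \<noteq> hexagon x (-y)"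
proof
  assume e: "hexagon x y = hexagon x (-y)"
  have "x + y \<in> hexagon x y" unfolding hexagon_def by simp
  then have "x + y \<in> hexagon x (-y)" by (simp only: e)
  moreover have "dt y x = - dt x y" by (rule dt_swap)
  ultimately show False using assms unfolding hexagon_def insert_iff empty_iff eq_dt[OF assms] dt_simps
    by (auto simp: ub_def)
qed

lemma adj_intro: assumes "ub x y" shows "adj (hexagon x y) (hexagon x (-y))"
  unfolding adj_def adm_iff
proof (intro conjI exI)
  show "ub x y" "hexagon x y = hexagon x y" by (fact assms) simp
  show "ub x (-y)" "hexagon x (-y) = hexagon x (-y)" using assms by simp_all
  show "hexagon x y \<noteq> hexagon x (-y)" by (rule hex_neq[OF assms])
  have "dt y x = - dt x y" by (rule dt_swap)
  then show "y \<noteq> x" "y \<noteq> - x" using assms by (auto simp: eq_dt[OF assms] ub_def)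
  show "{x, - x, y, - y} \<subseteq> hexagon x y \<inter> hexagon x (- y)" by (auto simp: hexagon_def)
qed

lemma adj_char: assumes "adj H K" shows "\<exists>x y. ub x y \<and> H = hexagon x y \<and> K = hexagon x (-y)"
proof -
  obtain a b c d \<sigma> \<mu> where u1: "ub a b" "H = hexagon a b" and u2: "ub c d" "K = hexagon c d"
    and ne: "H \<noteq> K" and sm: "\<mu> \<noteq> \<sigma>" "\<mu> \<noteq> -\<sigma>" "{\<sigma>, -\<sigma>, \<mu>, -\<mu>} \<subseteq> H \<inter> K"
    using assms unfolding adj_def adm_iff by blast
  have 1: "ub \<sigma> \<mu> \<and> (H = hexagon \<sigma> \<mu> \<or> H = hexagon \<sigma> (-\<mu>))"
    using hex_struct[of a b \<sigma> \<mu>] u1 sm by auto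
  have 2: "K = hexagon \<sigma> \<mu> \<or> K = hexagon \<sigma> (-\<mu>)"
    using hex_struct[of c d \<sigma> \<mu>] u2 sm by auto
  show ?thesis
  proof (cases "H = hexagon \<sigma> \<mu>")
    case True
    then show ?thesis using 1 2 ne by blast
  next
    case False
    then have "H = hexagon \<sigma> (-\<mu>)" "K = hexagon \<sigma> \<mu>" using 1 2 ne by auto
    then show ?thesis using 1 by (intro exI[of _ \<sigma>] exI[of _ "-\<mu>"]) simp
  qed
qed

lemma mv_add: "(A::int^2^2) *v (a + b) = A *v a + A *v b"
  by (simp add: veq mv1 mv2 algebra_simps)
lemma mv_neg: "(A::int^2^2) *v (- a) = - (A *v a)"
  by (simp add: veq mv1 mv2 algebra_simps)

lemma mv_diff: "(A::int^2^2) *v (a - b) = A *v a - A *v b"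
  by (simp add: veq mv1 mv2 algebra_simps)

lemma act_hex: "act A (hexagon a b) = hexagon (A *v a) (A *v b)"
  by (simp add: act_def hexagon_def mv_add mv_neg mv_diff)

lemma dt_mv: "dt (A *v a) (A *v b) = det A * dt a b"
  by (simp add: dt_def mv1 mv2 det_2 algebra_simps)

lemma ub_mv: "det A = 1 \<Longrightarrow> ub a b \<Longrightarrow> ub (A *v a) (A *v b)"
  by (simp add: ub_def dt_mv)

lemma adj_act: assumes "det A = 1" "adj H K" shows "adj (act A H) (act A K)"
proof -
  obtain x y where "ub x y" "H = hexagon x y" "K = hexagon x (-y)" using adj_char[OF assms(2)] by blast
  then show ?thesis using adj_intro[of "A *v x" "A *v y"] ub_mv[OF assms(1)]
    by (simp add: act_hex mv_neg)
qed

lemma pow_act: "det A = 1 \<Longrightarrow> (adj ^^ n) H K \<Longrightarrow> (adj ^^ n) (act A H) (act A K)"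
proof (induction n arbitrary: K)
  case 0 then show ?case by simp
next
  case (Suc n)
  from Suc.prems(2) obtain K' where "(adj ^^ n) H K'" "adj K' K" by (rule relpowp_Suc_E)
  then show ?case using Suc.IH[of K'] Suc.prems(1) adj_act by (meson relpowp_Suc_I)
qed




lemma pairs_valid:
  assumes "ub x y" "u \<in> hexagon x y" "v \<in> hexagon x y" "u + v \<in> hexagon x y" "ub u v"
  shows "(u = x \<and> v = y) \<or> (u = x \<and> v = -(x+y)) \<or> (u = y \<and> v = x) \<or> (u = y \<and> v = -(x+y)) \<or>
         (u = -x \<and> v = -y) \<or> (u = -x \<and> v = x+y) \<or> (u = -y \<and> v = -x) \<or> (u = -y \<and> v = x+y) \<or>
         (u = x+y \<and> v = -x) \<or> (u = x+y \<and> v = -y) \<or> (u = -(x+y) \<and> v = x) \<or> (u = -(x+y) \<and> v = y)"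
proof -
  have eqd: "\<And>u v. (u = v) \<longleftrightarrow> (dt u y = dt v y \<and> dt x u = dt x v)" by (rule eq_dt[OF assms(1)])
  have sw: "dt y x = - dt x y" by (rule dt_swap)
  have D: "dt x y = 1 \<or> dt x y = -1" using assms(1) by (simp add: ub_def)
  have m: "u + v \<in> hexagon x y \<longleftrightarrow> (u + v = x \<or> u + v = -x \<or> u + v = y \<or> u + v = -y \<or> u + v = x + y \<or> u + v = -(x+y))"
    by (simp add: hexagon_def)
  have ubd: "ub u v \<longleftrightarrow> dt u v = 1 \<or> dt u v = -1" by (simp add: ub_def)
  show ?thesis
    using assms(2,3) unfolding hexagon_def insert_iff empty_iff simp_thms
    apply (elim disjE)
    using assms(4,5) unfolding m ubd
    apply (simp_all only: )
    apply (simp_all only: eqd dt_simps sw)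
    using D
    apply auto
    done
qed

definition kap :: "int^2 \<Rightarrow> int^2 \<Rightarrow> bool" where
  "kap x y \<longleftrightarrow> (even (x$1*y$1 + x$2*y$2 + y$1*x$2) \<longleftrightarrow> dt x y = 1)"

lemma kap_inv:
  assumes "ub x y" "u \<in> hexagon x y" "v \<in> hexagon x y" "u + v \<in> hexagon x y" "ub u v"
  shows "kap u v = kap x y"
proof -
  have sw: "dt y x = - dt x y" by (rule dt_swap)
  have D: "dt x y = 1 \<or> dt x y = -1" using assms(1) by (simp add: ub_def)
  have "odd (dt x y)" using D by auto
  then have Dodd: "odd (x$1*y$2 - x$2*y$1)" by (simp add: dt_def)
  show ?thesis
    using pairs_valid[OF assms]
    apply (elim disjE conjE)
    apply (simp_all only: )
    apply (simp_all add: kap_def sw)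
    using D Dodd
    apply auto
    done
qed

lemma kap_flip: "ub x y \<Longrightarrow> kap x (-y) \<longleftrightarrow> \<not> kap x y"
  by (auto simp: kap_def ub_def)



lemma vec2_add: "vec2 a b + vec2 c d = vec2 (a+c) (b+d)" by (simp add: veq vec2_def)
lemma vec2_neg: "- vec2 a b = vec2 (-a) (-b)" by (simp add: veq vec2_def)
lemma vec2_eq: "vec2 a b = vec2 c d \<longleftrightarrow> a = c \<and> b = d" by (simp add: veq vec2_def)
lemma vec2_split: "x = vec2 (x$1) (x$2)" by (simp add: veq vec2_def)

definition ip :: "int^2 \<Rightarrow> int^2 \<Rightarrow> int" where "ip u v = u$1 * v$1 + u$2 * v$2"

lemma sq_bound: assumes "(a::int)*a + b*b \<le> 2" shows "a = -1 \<or> a = 0 \<or> a = 1"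
proof -
  have "b*b \<ge> 0" by simp
  then have h: "a*a \<le> 2" using assms by linarith
  have "\<bar>a\<bar> \<le> 1"
  proof (rule ccontr)
    assume "\<not> \<bar>a\<bar> \<le> 1"
    then have "\<bar>a\<bar> \<ge> 2" by simp
    then have "\<bar>a\<bar> * \<bar>a\<bar> \<ge> 2 * 2" by (metis mult_mono' abs_ge_zero zero_le_numeral)
    then show False using h by (simp add: abs_mult[symmetric])
  qed
  then show ?thesis by auto
qed

lemma XY_bound:
  fixes X Y t :: int
  assumes "0 \<le> t" "t \<le> X" "t \<le> Y" "X * Y = t*t + 1"
  shows "X \<le> 2"
proof (rule ccontr)
  assume "\<not> X \<le> 2"
  then have X3: "X \<ge> 3" by simp
  show False
  proof (cases "X \<ge> t + 1")
    case True
    have "(t+1) * t \<le> X * Y" using True assms(1,3) by (simp add: mult_mono)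
    then have "t \<le> 1" using assms(4) by (simp add: algebra_simps)
    then have "t = 0 \<or> t = 1" using assms(1) by linarith
    then have "X * Y \<le> 2" using assms(4) by auto
    moreover have "Y \<ge> 1"
    proof (rule ccontr)
      assume "\<not> Y \<ge> 1"
      then have "Y \<le> 0" by simp
      then have "X * Y \<le> 0" using X3 by (simp add: mult_nonneg_nonpos)
      then show False using assms(4) by (smt (verit) assms(1) mult_nonneg_nonneg)
    qed
    then have "X * Y \<ge> 3 * 1" using X3 by (metis mult_mono zero_le_numeral zero_le_one order_trans)
    ultimately show False by simp
  next
    case False
    then have "X = t" using assms(2) by simp
    then have "t * (Y - t) = 1" using assms(4) by (simp add: algebra_simps)
    then have "t = 1" using assms(1) by (simp add: zmult_eq_1_iff)
    then show False using X3 \<open>X = t\<close> by simp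
  qed
qed


lemma vec2_c[simp]: "vec2 a b $ 1 = a" "vec2 a b $ 2 = b" by (simp_all add: vec2_def)

lemma base_case:
  assumes u: "ub x y" and h: "ip x y \<le> 0" "ip x y + ip y y \<ge> 0" "ip x y + ip x x \<ge> 0"
  shows "hexagon x y = W0 \<or> hexagon x y = hexagon (vec2 1 0) (vec2 0 1)"
proof -
  obtain a b c d where x: "x = vec2 a b" and y: "y = vec2 c d" using vec2_split by metis
  have D: "a*d - b*c = 1 \<or> a*d - b*c = -1" using u by (simp add: ub_def dt_def x y)
  have h1: "a*c + b*d \<le> 0" "a*c + b*d + (c*c + d*d) \<ge> 0" "a*c + b*d + (a*a + b*b) \<ge> 0"
    using h by (simp_all add: ip_def x y)
  have L: "(a*a + b*b) * (c*c + d*d) = (-(a*c + b*d)) * (-(a*c + b*d)) + (a*d - b*c)*(a*d - b*c)"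
    by (simp add: algebra_simps)
  have DD: "(a*d - b*c)*(a*d - b*c) = 1" using D by auto
  have X: "a*a + b*b \<le> 2"
    by (rule XY_bound[of "-(a*c + b*d)" _ "c*c + d*d"]) (use h1 L DD in auto)
  have Y: "c*c + d*d \<le> 2"
    by (rule XY_bound[of "-(a*c + b*d)" _ "a*a + b*b"]) (use h1 L DD in \<open>auto simp: mult.commute\<close>)
  have ra: "a = -1 \<or> a = 0 \<or> a = 1" using sq_bound[of a b] X by simp
  have rb: "b = -1 \<or> b = 0 \<or> b = 1" using sq_bound[of b a] X by (simp add: add.commute)
  have rc: "c = -1 \<or> c = 0 \<or> c = 1" using sq_bound[of c d] Y by simp
  have rd: "d = -1 \<or> d = 0 \<or> d = 1" using sq_bound[of d c] Y by (simp add: add.commute)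
  show ?thesis
    unfolding x y using ra rb rc rd D h1
    apply (elim disjE)
    apply (simp_all only: )
    apply (simp_all add: hexagon_def W0_def vec2_add vec2_neg vec2_eq insert_commute)
    done
qed


lemma W0_hex: "W0 = hexagon (vec2 1 0) (vec2 0 (-1))"
  unfolding W0_def hexagon_def by (auto simp: vec2_add vec2_neg)

lemma ub_W0: "ub (vec2 1 0) (vec2 0 (-1))" by (simp add: ub_def dt_def vec2_def)

definition MM :: "int^2 \<Rightarrow> int^2 \<Rightarrow> nat" where
  "MM x y = nat (ip x x + ip y y + ip (x+y) (x+y))"

lemma ip_nn: "ip v v \<ge> 0" by (simp add: ip_def)

lemma hex_rot1: "hexagon x y = hexagon y (-(x+y))"
  by (simp add: hexagon_def algebra_simps insert_commute)
lemma hex_rot2: "hexagon x y = hexagon (-(x+y)) x"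
  by (simp add: hexagon_def algebra_simps insert_commute)

lemma MM_rot1: "MM y (-(x+y)) = MM x y"
  by (simp add: MM_def ip_def algebra_simps)
lemma MM_rot2: "MM (-(x+y)) x = MM x y"
  by (simp add: MM_def ip_def algebra_simps)

lemma ub_rot1: "ub x y \<Longrightarrow> ub y (-(x+y))"
  by (auto simp: ub_def dt_def algebra_simps)
lemma ub_rot2: "ub x y \<Longrightarrow> ub (-(x+y)) x"
  by (auto simp: ub_def dt_def algebra_simps)

lemma MM_dec: assumes "ip x y > 0" shows "MM x (-y) < MM x y"
proof -
  have "ip (x + -y) (x + -y) = ip (x+y) (x+y) - 4 * ip x y" by (simp add: ip_def algebra_simps)
  moreover have "0 \<le> ip x x + ip (-y) (-y) + ip (x + -y) (x + -y)" using ip_nn[of x] ip_nn[of "-y"] ip_nn[of "x + -y"] by linarith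
  moreover have "ip (-y) (-y) = ip y y" by (simp add: ip_def)
  ultimately show ?thesis unfolding MM_def using assms by (simp add: nat_less_eq_zless)
qed

lemma W1_reach: "adj\<^sup>*\<^sup>* W0 (hexagon (vec2 1 0) (vec2 0 1))"
proof -
  have "adj W0 (hexagon (vec2 1 0) (- vec2 0 (-1)))" unfolding W0_hex by (rule adj_intro[OF ub_W0])
  then show ?thesis by (simp add: vec2_neg)
qed

lemma conn_aux: "\<forall>x y. ub x y \<longrightarrow> MM x y = m \<longrightarrow> adj\<^sup>*\<^sup>* W0 (hexagon x y)"
proof (induction m rule: less_induct)
  case (less m)
  have step: "adj\<^sup>*\<^sup>* W0 (hexagon p q)" if "ub p q" "ip p q > 0" "MM p q = m" for p q
  proof -
    have "adj\<^sup>*\<^sup>* W0 (hexagon p (-q))" using less MM_dec[OF that(2)] that by auto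
    moreover have "adj (hexagon p (-q)) (hexagon p q)" using adj_intro[of p "-q"] that(1) by simp
    ultimately show ?thesis by (rule rtranclp.rtrancl_into_rtrancl)
  qed
  show ?case
  proof (intro allI impI)
    fix x y assume u: "ub x y" and m: "MM x y = m"
    show "adj\<^sup>*\<^sup>* W0 (hexagon x y)"
    proof (cases "ip x y > 0")
      case True then show ?thesis using step u m by blast
    next
      case F1: False
      show ?thesis
      proof (cases "ip y (-(x+y)) > 0")
        case True then show ?thesis using step[OF ub_rot1[OF u]] m MM_rot1 hex_rot1 by metis
      next
        case F2: False
        show ?thesis
        proof (cases "ip (-(x+y)) x > 0")
          case True then show ?thesis using step[OF ub_rot2[OF u]] m MM_rot2 hex_rot2 by metis
        next
          case F3: False
          have "ip x y \<le> 0" "ip x y + ip y y \<ge> 0" "ip x y + ip x x \<ge> 0"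
            using F1 F2 F3 by (auto simp: ip_def algebra_simps)
          then have "hexagon x y = W0 \<or> hexagon x y = hexagon (vec2 1 0) (vec2 0 1)"
            using base_case u by blast
          then show ?thesis using W1_reach by auto
        qed
      qed
    qed
  qed
qed

lemma conn: "ub x y \<Longrightarrow> adj\<^sup>*\<^sup>* W0 (hexagon x y)"
  using conn_aux by blast



definition col :: "(int^2) set \<Rightarrow> bool" where
  "col H = (let p = (SOME p. ub (fst p) (snd p) \<and> H = hexagon (fst p) (snd p)) in kap (fst p) (snd p))"

lemma col_hex: assumes "ub x y" shows "col (hexagon x y) = kap x y"
proof -
  define p where "p = (SOME p. ub (fst p) (snd p) \<and> hexagon x y = hexagon (fst p) (snd p))"
  have "ub (fst p) (snd p) \<and> hexagon x y = hexagon (fst p) (snd p)"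
    unfolding p_def by (rule someI[of _ "(x,y)"]) (simp add: assms)
  then have u: "ub (fst p) (snd p)" and h: "hexagon x y = hexagon (fst p) (snd p)" by auto
  have "fst p \<in> hexagon x y" "snd p \<in> hexagon x y" "fst p + snd p \<in> hexagon x y"
    unfolding h by (simp_all add: hexagon_def)
  then have "kap (fst p) (snd p) = kap x y" using kap_inv[OF assms _ _ _ u] by blast
  then show ?thesis unfolding col_def p_def[symmetric] by simp
qed

lemma parity: "(adj ^^ n) H K \<Longrightarrow> (even n \<longleftrightarrow> (col H \<longleftrightarrow> col K))"
proof (induction n arbitrary: K)
  case 0 then show ?case by simp
next
  case (Suc n)
  from Suc.prems obtain K' where 1: "(adj ^^ n) H K'" and 2: "adj K' K" by (rule relpowp_Suc_E)
  obtain x y where "ub x y" "K' = hexagon x y" "K = hexagon x (-y)" using adj_char[OF 2] by blast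
  then have "col K \<longleftrightarrow> \<not> col K'" by (simp add: col_hex kap_flip)
  then show ?case using Suc.IH[OF 1] by auto
qed

lemma reach: assumes "det A = 1" shows "\<exists>n. (adj ^^ n) W0 (act A W0)"
proof -
  have "act A W0 = hexagon (A *v vec2 1 0) (A *v vec2 0 (-1))" by (simp add: W0_hex act_hex)
  moreover have "ub (A *v vec2 1 0) (A *v vec2 0 (-1))" by (rule ub_mv[OF assms ub_W0])
  ultimately show ?thesis using conn rtranclp_power by metis
qed

lemma act_mul: "act (A ** B) H = act A (act B H)"
  by (simp add: act_def image_image matrix_vector_mul_assoc)

theorem lemma1:
  fixes A B :: "int ^ 2 ^ 2"
  assumes "det A = 1" and "det B = 1"
  shows "cfun (A ** B) \<le> cfun A + cfun B \<and> cfun (A ** B) mod 2 = (cfun A + cfun B) mod 2"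
proof -
  have dAB: "det (A ** B) = 1" using assms by (simp add: det_mul)
  have PA: "(adj ^^ cfun A) W0 (act A W0)"
    unfolding cfun_def gdist_def by (rule LeastI_ex[OF reach[OF assms(1)]])
  have PB: "(adj ^^ cfun B) W0 (act B W0)"
    unfolding cfun_def gdist_def by (rule LeastI_ex[OF reach[OF assms(2)]])
  have PAB: "(adj ^^ cfun (A ** B)) W0 (act (A ** B) W0)"
    unfolding cfun_def gdist_def by (rule LeastI_ex[OF reach[OF dAB]])
  have PB': "(adj ^^ cfun B) (act A W0) (act (A ** B) W0)"
    using pow_act[OF assms(1) PB] by (simp add: act_mul)
  have "(adj ^^ (cfun A + cfun B)) W0 (act (A ** B) W0)"
    using PA PB' by (auto simp: relpowp_add)
  then have le: "cfun (A ** B) \<le> cfun A + cfun B"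
    unfolding cfun_def gdist_def by (rule Least_le)
  have "even (cfun (A ** B)) \<longleftrightarrow> even (cfun A + cfun B)"
    using parity[OF PA] parity[OF PB'] parity[OF PAB] by auto
  then have "cfun (A ** B) mod 2 = (cfun A + cfun B) mod 2"
    by (metis odd_iff_mod_2_eq_one even_iff_mod_2_eq_zero)
  with le show ?thesis by simp
qed

end
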